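(* In the self-training loop with finite $\Gamma\in(0,\infty)$, the variance of the outputs either stays bounded away from zero, $\inf_{t\ge0}\mathrm{Var}(\theta^\star_t)>0$, or oscillates, $\limsup_{t\to\infty}\mathrm{Var}(\theta^\star_t)>\liminf_{t\to\infty}\mathrm{Var}(\theta^\star_t)$.
   Context: Self-training loop. Fix $\mu_T\in\mathbb R$, $\sigma_T>0$, $\gamma>0$, $\Gamma\in(0,\infty]$; population preferences $\theta\sim N(\mu_T,\sigma_T^2)$ with density $\pi_T$; $\phi$ denotes the standard normal density. Set $\pi_0=\pi_T$. For $t=0,1,2,\dots$, given the AI prior $\pi_t$ (a probability distribution on $\mathbb R$): a user of type $\theta$ chooses $\sigma\in[0,\infty]$, the AI observes $s=\theta+\varepsilon$, $\varepsilon\sim N(0,\sigma^2)$, and outputs the posterior mean $\theta_{A,t}(s,\sigma)=\frac{\int x\,\phi((s-x)/\sigma)\,\pi_t(dx)}{\int \phi((s-x)/\sigma)\,\pi_t(dx)}$ for $\sigma\in(0,\infty)$ (and the mean of $\pi_t$ if $\sigma=\infty$). Fidelity error $E_t(\theta,\sigma)=\mathbb E_{s\sim N(\theta,\sigma^2)}[(\theta_{A,t}(s,\sigma)-\theta)^2]$; communication cost $I(\sigma)=-\tfrac12\ln\frac{\sigma^2}{\sigma_T^2+\sigma^2}$ (same at every $t$, $I(\infty)=0$, $I(0)=\infty$); loss $L_t(\theta,\sigma)=E_t(\theta,\sigma)+\gamma I(\sigma)$; $\sigma^\star_t(\theta)\in\arg\min_{\sigma}L_t(\theta,\sigma)$.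 Output: $\theta^\star_t=\theta_{A,t}(s,\sigma^\star_t(\theta))$ with $s\sim N(\theta,\sigma^\star_t(\theta)^2)$ if $L_t(\theta,\sigma^\star_t(\theta))\le\Gamma$, else $\theta^\star_t=\theta$. The next prior $\pi_{t+1}$ is the law of $\theta^\star_t$ when $\theta\sim\pi_T$. $\mathrm{Var}(\theta^\star_t)$ denotes the variance of this law. *)

theory Defs
  imports "HOL-Probability.Probability"
begin

definition normal_meas :: "real \<Rightarrow> real \<Rightarrow> real measure" where
  "normal_meas m s = density lborel (normal_density m s)"

definition mean_of :: "real measure \<Rightarrow> real" where
  "mean_of P = (\<integral>x. x \<partial>P)"

definition Var_of :: "real measure \<Rightarrow> ennreal" where
  "Var_of P = (\<integral>\<^sup>+x. ennreal ((x - mean_of P)\<^sup>2) \<partial>P)"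

text \<open>For sigma = \<infinity> it is the prior mean; for sigma = 0 the signal is
  exact and the output is s (this case is never selected, since I(0) = \<infinity>).\<close>
definition post_mean :: "real measure \<Rightarrow> real \<Rightarrow> ereal \<Rightarrow> real" where
  "post_mean P s \<sigma> =
     (if \<sigma> = \<infinity> then mean_of P
      else if \<sigma> = 0 then s
      else (\<integral>x. x * std_normal_density ((s - x) / real_of_ereal \<sigma>) \<partial>P)
         / (\<integral>x. std_normal_density ((s - x) / real_of_ereal \<sigma>) \<partial>P))"

definition fid_err :: "real measure \<Rightarrow> real \<Rightarrow> ereal \<Rightarrow> ennreal" where
  "fid_err P \<theta> \<sigma> =
     (if \<sigma> = \<infinity> then ennreal ((mean_of P - \<theta>)\<^sup>2)
      else if \<sigma> = 0 then 0
      else (\<integral>\<^sup>+s. ennreal ((post_mean P s \<sigma> - \<theta>)\<^sup>2) \<partial>normal_meas \<theta> (real_of_ereal \<sigma>)))"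

definition comm_cost :: "real \<Rightarrow> ereal \<Rightarrow> ennreal" where
  "comm_cost \<sigma>T \<sigma> =
     (if \<sigma> = 0 then \<infinity>
      else if \<sigma> = \<infinity> then 0
      else ennreal (- (1/2) * ln ((real_of_ereal \<sigma>)\<^sup>2 / (\<sigma>T\<^sup>2 + (real_of_ereal \<sigma>)\<^sup>2))))"

definition loss :: "real measure \<Rightarrow> real \<Rightarrow> real \<Rightarrow> real \<Rightarrow> ereal \<Rightarrow> ennreal" where
  "loss P \<sigma>T \<gamma> \<theta> \<sigma> = fid_err P \<theta> \<sigma> + ennreal \<gamma> * comm_cost \<sigma>T \<sigma>"

definition is_opt_sigma :: "real measure \<Rightarrow> real \<Rightarrow> real \<Rightarrow> real \<Rightarrow> ereal \<Rightarrow> bool" where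
  "is_opt_sigma P \<sigma>T \<gamma> \<theta> \<sigma> \<longleftrightarrow>
     0 \<le> \<sigma> \<and> (\<forall>\<sigma>'. 0 \<le> \<sigma>' \<longrightarrow> loss P \<sigma>T \<gamma> \<theta> \<sigma> \<le> loss P \<sigma>T \<gamma> \<theta> \<sigma>')"

definition obs_output :: "real measure \<Rightarrow> real \<Rightarrow> ereal \<Rightarrow> real measure" where
  "obs_output P \<theta> \<sigma> =
     (if \<sigma> = \<infinity> then return borel (mean_of P)
      else if \<sigma> = 0 then return borel \<theta>
      else distr (normal_meas \<theta> (real_of_ereal \<sigma>)) borel (\<lambda>s. post_mean P s \<sigma>))"

text \<open>Conditional law of theta*_t given the user type theta, for prior P and chosen sigma.\<close>
definition out_kernel :: "real measure \<Rightarrow> real \<Rightarrow> real \<Rightarrow> real \<Rightarrow> ereal \<Rightarrow> real \<Rightarrow> real measure" where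
  "out_kernel P \<sigma>T \<gamma> \<Gamma> \<sigma> \<theta> =
     (if loss P \<sigma>T \<gamma> \<theta> \<sigma> \<le> ennreal \<Gamma> then obs_output P \<theta> \<sigma> else return borel \<theta>)"

end

theory Submission imports Defs begin

lemma post_mean_meas:
  assumes Q: "prob_space Q" "sets Q = sets borel" and c: "c \<noteq> \<infinity>" "c \<noteq> 0"
  shows "(\<lambda>s. post_mean Q s c) \<in> borel_measurable borel"
proof -
  interpret prob_space Q by fact
  have S: "sets (borel \<Otimes>\<^sub>M Q) = sets (borel \<Otimes>\<^sub>M (borel::real measure))"
    by (rule sets_pair_measure_cong) (auto simp: Q)
  have m1: "(\<lambda>s. \<integral>x. x * std_normal_density ((s - x) / real_of_ereal c) \<partial>Q) \<in> borel_measurable borel"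
    apply (rule borel_measurable_lebesgue_integral)
    apply (subst measurable_cong_sets[OF S refl])
    by measurable
  have m2: "(\<lambda>s. \<integral>x. std_normal_density ((s - x) / real_of_ereal c) \<partial>Q) \<in> borel_measurable borel"
    apply (rule borel_measurable_lebesgue_integral)
    apply (subst measurable_cong_sets[OF S refl])
    by measurable
  show ?thesis unfolding post_mean_def using c m1 m2 by simp
qed

lemma sets_normal_meas[simp]: "sets (normal_meas m s) = sets borel"
  by (simp add: normal_meas_def)

lemma obs_err:
  assumes Q: "prob_space Q" "sets Q = sets borel"
  shows "(\<integral>\<^sup>+x. ennreal ((x - \<theta>)\<^sup>2) \<partial>obs_output Q \<theta> \<sigma>) = fid_err Q \<theta> \<sigma>"
proof (cases "\<sigma> = \<infinity> \<or> \<sigma> = 0")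
  case True
  then show ?thesis
  proof
    assume h: "\<sigma> = \<infinity>"
    have "(\<integral>\<^sup>+x. ennreal ((x - \<theta>)\<^sup>2) \<partial>return borel (mean_of Q)) = ennreal ((mean_of Q - \<theta>)\<^sup>2)"
      by (rule nn_integral_return) auto
    then show ?thesis using h by (simp add: obs_output_def fid_err_def)
  next
    assume h: "\<sigma> = 0"
    have "(\<integral>\<^sup>+x. ennreal ((x - \<theta>)\<^sup>2) \<partial>return borel \<theta>) = ennreal ((\<theta> - \<theta>)\<^sup>2)"
      by (rule nn_integral_return) auto
    then show ?thesis using h by (simp add: obs_output_def fid_err_def)
  qed
next
  case False
  have m: "(\<lambda>s. post_mean Q s \<sigma>) \<in> borel_measurable borel"
    using post_mean_meas[OF Q] False by auto
  have m': "(\<lambda>s. post_mean Q s \<sigma>) \<in> normal_meas \<theta> (real_of_ereal \<sigma>) \<rightarrow>\<^sub>M borel"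
    using m measurable_cong_sets[OF sets_normal_meas refl, of \<theta> "real_of_ereal \<sigma>" borel] by (metis (no_types))
  show ?thesis using False
    by (simp add: obs_output_def fid_err_def nn_integral_distr[OF m'])
qed

lemma kernel_err:
  assumes Q: "prob_space Q" "sets Q = sets borel"
  shows "(\<integral>\<^sup>+x. ennreal ((x - \<theta>)\<^sup>2) \<partial>out_kernel Q \<sigma>T \<gamma> \<Gamma> \<sigma> \<theta>) \<le> ennreal \<Gamma>"
proof (cases "loss Q \<sigma>T \<gamma> \<theta> \<sigma> \<le> ennreal \<Gamma>")
  case True
  have "fid_err Q \<theta> \<sigma> \<le> loss Q \<sigma>T \<gamma> \<theta> \<sigma>" unfolding loss_def by simp
  then show ?thesis using True obs_err[OF Q] by (simp add: out_kernel_def)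
next
  case False
  have "(\<integral>\<^sup>+x. ennreal ((x - \<theta>)\<^sup>2) \<partial>return borel \<theta>) = ennreal ((\<theta> - \<theta>)\<^sup>2)"
    by (rule nn_integral_return) auto
  then show ?thesis using False by (simp add: out_kernel_def)
qed
lemma kernel_lower:
  assumes K: "K \<in> space (prob_algebra borel)"
    and e: "(\<integral>\<^sup>+x. ennreal ((x - \<theta>)\<^sup>2) \<partial>K) \<le> ennreal \<Gamma>"
    and G: "0 \<le> \<Gamma>" and d: "4 * \<Gamma> \<le> (\<theta> - m)\<^sup>2"
  shows "ennreal \<Gamma> \<le> (\<integral>\<^sup>+x. ennreal ((x - m)\<^sup>2) \<partial>K)"
proof -
  have pK: "prob_space K" and sK: "sets K = sets borel" using K by (auto simp: space_prob_algebra)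
  have mK: "borel_measurable K = borel_measurable borel"
    using measurable_cong_sets[OF sK refl] .
  have m1: "(\<lambda>x. ennreal ((x - m)\<^sup>2)) \<in> borel_measurable K" unfolding mK by measurable
  have m2: "(\<lambda>x. ennreal ((x - \<theta>)\<^sup>2)) \<in> borel_measurable K" unfolding mK by measurable
  have "ennreal ((\<theta> - m)\<^sup>2 / 2) = (\<integral>\<^sup>+x. ennreal ((\<theta> - m)\<^sup>2 / 2) \<partial>K)"
    using prob_space.emeasure_space_1[OF pK] by (simp add: nn_integral_const)
  also have "\<dots> \<le> (\<integral>\<^sup>+x. ennreal ((x - m)\<^sup>2) + ennreal ((x - \<theta>)\<^sup>2) \<partial>K)"
  proof (rule nn_integral_mono)
    fix x
    have "(\<theta> - m)\<^sup>2 / 2 \<le> (x - m)\<^sup>2 + (x - \<theta>)\<^sup>2"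
    proof -
      have "(\<theta> - m)\<^sup>2 = 2 * (x - m)\<^sup>2 + 2 * (x - \<theta>)\<^sup>2 - ((x - m) + (x - \<theta>))\<^sup>2"
        by (simp add: power2_eq_square algebra_simps)
      moreover have "0 \<le> ((x - m) + (x - \<theta>))\<^sup>2" by simp
      ultimately show ?thesis by linarith
    qed
    then show "ennreal ((\<theta> - m)\<^sup>2 / 2) \<le> ennreal ((x - m)\<^sup>2) + ennreal ((x - \<theta>)\<^sup>2)"
      by (simp add: ennreal_plus[symmetric] del: ennreal_plus)
  qed
  also have "\<dots> = (\<integral>\<^sup>+x. ennreal ((x - m)\<^sup>2) \<partial>K) + (\<integral>\<^sup>+x. ennreal ((x - \<theta>)\<^sup>2) \<partial>K)"
    by (rule nn_integral_add[OF m1 m2])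
  also have "\<dots> \<le> (\<integral>\<^sup>+x. ennreal ((x - m)\<^sup>2) \<partial>K) + ennreal \<Gamma>"
    using e by (rule add_left_mono)
  finally have "ennreal \<Gamma> + ennreal \<Gamma> \<le> (\<integral>\<^sup>+x. ennreal ((x - m)\<^sup>2) \<partial>K) + ennreal \<Gamma>"
  proof -
    assume h: "ennreal ((\<theta> - m)\<^sup>2 / 2) \<le> (\<integral>\<^sup>+x. ennreal ((x - m)\<^sup>2) \<partial>K) + ennreal \<Gamma>"
    have "ennreal \<Gamma> + ennreal \<Gamma> = ennreal (2 * \<Gamma>)" using G by (simp add: ennreal_plus[symmetric] del: ennreal_plus)
    also have "\<dots> \<le> ennreal ((\<theta> - m)\<^sup>2 / 2)" using d by (intro ennreal_leI) simp
    finally show ?thesis using h by (rule order_trans)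
  qed
  then show ?thesis
    by simp
qed

lemma normal_tail:
  assumes s: "\<sigma> > 0" and a: "a \<ge> 0"
  shows "ennreal (normal_density \<mu> \<sigma> (\<mu> + a + 1)) \<le> emeasure (normal_meas \<mu> \<sigma>) {x. a \<le> \<bar>x - m\<bar>}"
proof -
  define I where "I = (if m \<le> \<mu> then {\<mu>+a..\<mu>+a+1} else {\<mu>-a-1..\<mu>-a})"
  define d0 where "d0 = normal_density \<mu> \<sigma> (\<mu> + a + 1)"
  have IS: "I \<subseteq> {x. a \<le> \<bar>x - m\<bar>}" unfolding I_def by auto
  have lI: "emeasure lborel I = 1" unfolding I_def by simp
  have pt: "normal_density \<mu> \<sigma> x \<ge> d0" if "x \<in> I" for x
  proof -
    have "\<bar>x - \<mu>\<bar> \<le> \<bar>a + 1\<bar>"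
      using that a unfolding I_def by (auto split: if_splits simp: abs_if)
    then have "(x - \<mu>)\<^sup>2 \<le> (a + 1)\<^sup>2" by (simp add: abs_le_square_iff)
    then have "-(a+1)\<^sup>2 / (2 * \<sigma>\<^sup>2) \<le> -(x - \<mu>)\<^sup>2 / (2 * \<sigma>\<^sup>2)"
      using s by (intro divide_right_mono) auto
    then show ?thesis unfolding d0_def normal_density_def
      by (intro mult_left_mono) auto
  qed
  have "ennreal d0 = (\<integral>\<^sup>+x. ennreal d0 * indicator I x \<partial>lborel)"
    using lI unfolding I_def by (simp add: nn_integral_cmult_indicator)
  also have "\<dots> \<le> (\<integral>\<^sup>+x. ennreal (normal_density \<mu> \<sigma> x) * indicator I x \<partial>lborel)"
    by (intro nn_integral_mono) (auto split: split_indicator intro: ennreal_leI pt)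
  also have "\<dots> = emeasure (normal_meas \<mu> \<sigma>) I"
    unfolding normal_meas_def I_def by (simp add: emeasure_density)
  also have "\<dots> \<le> emeasure (normal_meas \<mu> \<sigma>) {x. a \<le> \<bar>x - m\<bar>}"
    by (rule emeasure_mono[OF IS]) (simp add: normal_meas_def)
  finally show ?thesis unfolding d0_def .
qed

theorem theorem2:
  fixes \<mu>T \<sigma>T \<gamma> \<Gamma> :: real
    and P :: "nat \<Rightarrow> real measure"
    and sel :: "nat \<Rightarrow> real \<Rightarrow> ereal"
  assumes "\<sigma>T > 0" and "\<gamma> > 0" and "\<Gamma> > 0"
    and "P 0 = normal_meas \<mu>T \<sigma>T"
    and "\<And>t \<theta>. is_opt_sigma (P t) \<sigma>T \<gamma> \<theta> (sel t \<theta>)"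
    and "\<And>t. (\<lambda>\<theta>. out_kernel (P t) \<sigma>T \<gamma> \<Gamma> (sel t \<theta>) \<theta>) \<in> borel \<rightarrow>\<^sub>M prob_algebra borel"
    and "\<And>t. P (Suc t) = normal_meas \<mu>T \<sigma>T \<bind> (\<lambda>\<theta>. out_kernel (P t) \<sigma>T \<gamma> \<Gamma> (sel t \<theta>) \<theta>)"
  shows "(INF t. Var_of (P (Suc t))) > 0
         \<or> limsup (\<lambda>t. Var_of (P (Suc t))) > liminf (\<lambda>t. Var_of (P (Suc t)))"
proof -
  note sT = assms(1) and G = assms(3) and P0 = assms(4) and Kmeas = assms(6) and PS = assms(7)
  define N where "N = normal_meas \<mu>T \<sigma>T"
  define K where "K = (\<lambda>t \<theta>. out_kernel (P t) \<sigma>T \<gamma> \<Gamma> (sel t \<theta>) \<theta>)"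
  have Km: "K t \<in> N \<rightarrow>\<^sub>M prob_algebra borel" for t
    using Kmeas[of t] measurable_cong_sets[of N borel "prob_algebra borel" "prob_algebra borel"]
    unfolding K_def N_def by (metis (no_types) sets_normal_meas)
  have Kb: "K t \<in> borel \<rightarrow>\<^sub>M prob_algebra borel" for t
    using Kmeas[of t] unfolding K_def by simp
  have Nsp: "N \<in> space (prob_algebra borel)"
    using prob_space_normal_density[OF sT] by (simp add: space_prob_algebra N_def normal_meas_def)
  have PP: "prob_space (P t) \<and> sets (P t) = sets borel" for t
  proof (cases t)
    case 0 then show ?thesis
      using Nsp P0 by (simp add: space_prob_algebra N_def)
  next
    case (Suc u)
    have "P t = N \<bind> K u" using PS[of u] Suc by (simp add: N_def K_def)
    then show ?thesis
      using prob_space_bind'[OF Nsp Kb] sets_bind'[OF Nsp Kb] by simp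
  qed
  define a where "a = 2 * sqrt \<Gamma>"
  define d0 where "d0 = normal_density \<mu>T \<sigma>T (\<mu>T + a + 1)"
  have d0pos: "d0 > 0" unfolding d0_def normal_density_def using sT by simp
  have bound: "ennreal (\<Gamma> * d0) \<le> Var_of (P (Suc t))" for t
  proof -
    define m where "m = mean_of (P (Suc t))"
    define S where "S = {x. a \<le> \<bar>x - m\<bar>}"
    have SN: "S \<in> sets N" unfolding S_def N_def by simp
    have "Var_of (P (Suc t)) = (\<integral>\<^sup>+x. ennreal ((x - m)\<^sup>2) \<partial>(N \<bind> K t))"
      unfolding Var_of_def m_def using PS[of t] by (simp add: N_def K_def)
    also have "\<dots> = (\<integral>\<^sup>+\<theta>. (\<integral>\<^sup>+x. ennreal ((x - m)\<^sup>2) \<partial>K t \<theta>) \<partial>N)"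
      by (rule nn_integral_bind[OF _ measurable_prob_algebraD[OF Km]]) simp
    also have "\<dots> \<ge> (\<integral>\<^sup>+\<theta>. ennreal \<Gamma> * indicator S \<theta> \<partial>N)"
    proof (rule nn_integral_mono)
      fix \<theta> assume \<theta>: "\<theta> \<in> space N"
      show "ennreal \<Gamma> * indicator S \<theta> \<le> (\<integral>\<^sup>+x. ennreal ((x - m)\<^sup>2) \<partial>K t \<theta>)"
      proof (cases "\<theta> \<in> S")
        case True
        have "\<bar>a\<bar> \<le> \<bar>\<theta> - m\<bar>" using True G unfolding S_def a_def by simp
        then have "a\<^sup>2 \<le> (\<theta> - m)\<^sup>2" by (simp only: abs_le_square_iff)
        then have d: "4 * \<Gamma> \<le> (\<theta> - m)\<^sup>2" unfolding a_def using G by (simp add: power_mult_distrib)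
        have Ksp: "K t \<theta> \<in> space (prob_algebra borel)" using measurable_space[OF Km \<theta>] .
        have e: "(\<integral>\<^sup>+x. ennreal ((x - \<theta>)\<^sup>2) \<partial>K t \<theta>) \<le> ennreal \<Gamma>"
          unfolding K_def using kernel_err PP by blast
        show ?thesis using kernel_lower[OF Ksp e _ d] G True by simp
      qed simp
    qed
    also have "(\<integral>\<^sup>+\<theta>. ennreal \<Gamma> * indicator S \<theta> \<partial>N) = ennreal \<Gamma> * emeasure N S"
      using SN by (rule nn_integral_cmult_indicator)
    finally have V: "ennreal \<Gamma> * emeasure N S \<le> Var_of (P (Suc t))" .
    have "ennreal \<Gamma> * ennreal d0 \<le> ennreal \<Gamma> * emeasure N S"
      unfolding N_def S_def d0_def
      by (intro mult_left_mono normal_tail[OF sT]) (auto simp: a_def intro: less_imp_le[OF G])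
    then show ?thesis using V G d0pos by (simp add: ennreal_mult)
  qed
  have "0 < ennreal (\<Gamma> * d0)" using G d0pos by simp
  also have "\<dots> \<le> (INF t. Var_of (P (Suc t)))" by (rule INF_greatest) (rule bound)
  finally show ?thesis by simp
qed

end
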